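(* Let $M=(m_0,m_1,m_2,\ldots)$ be a (possibly finite) sequence of integers with $m_0=1$ and $m_j\ge 2$ for all $j\ge 1$. Assume that for every index $t\ge1$ and every prime $p$, if $p\mid m_t$ then $p\ge t$. Then for all positive integers $n$ and $r$ (with $r$ at most the largest index of $M$ if $M$ is finite) we have $$p_M(m_1m_2\cdots m_r\,n-1)\equiv 0 \pmod{\prod_{t=2}^{r} m_t}.$$
   Context: For $r\ge 0$ put $M_r:=m_0m_1\cdots m_r$. An $M$-ary partition of a positive integer $N$ is a partition of $N$ (order of parts disregarded) all of whose parts are of the form $M_r$ for some $r\ge 0$. $p_M(N)$ denotes the number of $M$-ary partitions of $N$. An empty product equals $1$. *)

theory Defs
  imports Main "HOL-Library.Multiset" "HOL-Library.Extended_Nat" "HOL-Computational_Algebra.Primes"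
begin

text \<open>The sequence M = (m_0, m_1, ...) is given by m :: nat => nat together with
  its largest index L :: enat (L = infinity for an infinite sequence); only the
  values m j with j <= L are meaningful.\<close>

definition Mprod :: "(nat \<Rightarrow> nat) \<Rightarrow> nat \<Rightarrow> nat" where
  "Mprod m r = (\<Prod>i\<le>r. m i)"

definition mary_partitions :: "(nat \<Rightarrow> nat) \<Rightarrow> enat \<Rightarrow> nat \<Rightarrow> nat multiset set" where
  "mary_partitions m L N =
     {P. (\<forall>x\<in>#P. \<exists>r. enat r \<le> L \<and> x = Mprod m r) \<and> sum_mset P = N}"

definition pM :: "(nat \<Rightarrow> nat) \<Rightarrow> enat \<Rightarrow> nat \<Rightarrow> nat" where
  "pM m L N = card (mary_partitions m L N)"

end

theory Submission
  imports Defs "HOL-Computational_Algebra.Primes"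
begin


definition dif :: "(nat \<Rightarrow> int) \<Rightarrow> nat \<Rightarrow> int" where
  "dif f n = f (Suc n) - f n"

lemma dif_apply: "dif f n = f (Suc n) - f n"
  by (simp add: dif_def)

lemma difk_Suc: "(dif ^^ Suc k) f = (dif ^^ k) (dif f)"
  by (simp only: funpow_Suc_right comp_def)

declare funpow.simps(2)[simp del]

lemma funpow_Suc_dif: "(dif ^^ Suc k) f = dif ((dif ^^ k) f)"
  by (simp add: funpow.simps(2))

lemma dif_zero: "(dif ^^ k) (\<lambda>_. 0) = (\<lambda>_. 0)"
  proof -
  have "dif (\<lambda>_. 0) = (\<lambda>_. 0)" by (rule ext) (simp add: dif_apply)
  then show ?thesis by (induction k) (simp_all add: funpow_Suc_dif)
qed

lemma difk_add: "(dif ^^ (j + k)) f = (dif ^^ j) ((dif ^^ k) f)"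
  by (simp add: funpow_add)

lemma newton: "f N = (\<Sum>g\<le>N. (dif ^^ g) f 0 * int (N choose g))"
proof (induction N arbitrary: f)
  case 0
  then show ?case by simp
next
  case (Suc N)
  define D where "D g = (dif ^^ g) f 0" for g
  have A: "f N = (\<Sum>g\<le>N. D g * int (N choose g))" using Suc[of f] by (simp add: D_def)
  have B: "dif f N = (\<Sum>g\<le>N. D (Suc g) * int (N choose g))"
    using Suc[of "dif f"] by (simp add: D_def difk_Suc)
  have A2: "(\<Sum>g\<le>N. D g * int (N choose g)) = D 0 + (\<Sum>h\<le>N. D (Suc h) * int (N choose Suc h))"
  proof -
    have "(\<Sum>g\<le>N. D g * int (N choose g)) = (\<Sum>g\<le>Suc N. D g * int (N choose g))"
      by simp
    also have "\<dots> = D 0 + (\<Sum>h\<le>N. D (Suc h) * int (N choose Suc h))"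
      by (subst sum.atMost_Suc_shift) simp
    finally show ?thesis .
  qed
  have "(\<Sum>g\<le>Suc N. D g * int (Suc N choose g)) =
        D 0 + (\<Sum>h\<le>N. D (Suc h) * int (Suc N choose Suc h))"
    by (subst sum.atMost_Suc_shift) simp
  also have "\<dots> = D 0 + (\<Sum>h\<le>N. D (Suc h) * int (N choose Suc h)) + (\<Sum>h\<le>N. D (Suc h) * int (N choose h))"
    by (simp add: sum.distrib algebra_simps)
  finally have C: "(\<Sum>g\<le>Suc N. D g * int (Suc N choose g)) = f N + dif f N"
    using A A2 B by simp
  have E: "f N + dif f N = f (Suc N)" by (simp add: dif_apply)
  show ?case using C E by (simp add: D_def)
qed

definition Rs :: "nat \<Rightarrow> (nat \<Rightarrow> int) \<Rightarrow> nat \<Rightarrow> int" where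
  "Rs a v u = (\<Sum>j<a. v (u + j))"

lemma dif_Rs: "dif (Rs a v) = Rs a (dif v)"
  by (rule ext) (simp add: dif_apply Rs_def sum_subtractf[symmetric])

lemma difk_Rs: "(dif ^^ k) (Rs a v) = Rs a ((dif ^^ k) v)"
  by (induction k arbitrary: v) (simp_all add: difk_Suc dif_Rs)

lemma dif_scale: "dif (\<lambda>y. w (a * y)) = (\<lambda>y. Rs a (dif w) (a * y))"
proof (rule ext)
  fix y
  have "Rs a (dif w) (a * y) = (\<Sum>j<a. w (a*y + Suc j) - w (a*y + j))"
    by (simp add: Rs_def dif_apply)
  also have "\<dots> = w (a*y + a) - w (a*y)"
    using sum_lessThan_telescope[of "\<lambda>j. w (a*y + j)" a] by simp
  finally show "dif (\<lambda>y. w (a * y)) y = Rs a (dif w) (a * y)"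
    by (simp add: dif_apply algebra_simps)
qed

lemma difk_scale: "(dif ^^ k) w = (\<lambda>_. 0) \<Longrightarrow> (dif ^^ k) (\<lambda>y. w (a * y)) = (\<lambda>_. 0)"
proof (induction k arbitrary: w)
  case 0
  then show ?case by simp
next
  case (Suc k)
  have "(dif ^^ k) (Rs a (dif w)) = (\<lambda>_. 0)"
    using Suc.prems by (simp add: difk_Rs difk_Suc Rs_def fun_eq_iff)
  then have "(dif ^^ k) (\<lambda>y. Rs a (dif w) (a * y)) = (\<lambda>_. 0)" by (rule Suc.IH)
  then show ?case by (simp add: difk_Suc dif_scale)
qed

lemma difk_shift: "(dif ^^ k) (\<lambda>n. f (n + c)) = (\<lambda>n. (dif ^^ k) f (n + c))"
proof (induction k arbitrary: f)
  case 0 then show ?case by simp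
next
  case (Suc k)
  have "dif (\<lambda>n. f (n + c)) = (\<lambda>n. dif f (n + c))" by (rule ext) (simp add: dif_apply)
  then show ?case using Suc[of "dif f"] by (simp add: difk_Suc)
qed

lemma difk_cmult: "(dif ^^ k) (\<lambda>n. c * f n) = (\<lambda>n. c * (dif ^^ k) f n)"
proof (induction k arbitrary: f)
  case 0 then show ?case by simp
next
  case (Suc k)
  have "dif (\<lambda>n. c * f n) = (\<lambda>n. c * dif f n)" by (rule ext) (simp add: dif_apply algebra_simps)
  then show ?case using Suc[of "dif f"] by (simp add: difk_Suc)
qed

definition Sm :: "(nat \<Rightarrow> int) \<Rightarrow> nat \<Rightarrow> int" where
  "Sm w N = (\<Sum>u<N. w u)"

lemma dif_Sm: "dif (Sm w) = w"
  by (rule ext) (simp add: dif_apply Sm_def)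

lemma coprime_small:
  fixes a g :: nat
  assumes "\<forall>p. prime p \<and> p dvd a \<longrightarrow> k < p" "0 < g" "g \<le> k"
  shows "coprime g a"
proof (rule ccontr)
  assume "\<not> coprime g a"
  then have "gcd g a \<noteq> 1" by (simp add: coprime_iff_gcd_eq_1)
  then obtain p where p: "prime p" "p dvd gcd g a" using prime_factor_nat by blast
  then have "p dvd g" "p dvd a" by auto
  then have "p \<le> g" using assms(2) by (simp add: dvd_imp_le)
  then show False using assms(1) p(1) \<open>p dvd a\<close> assms(3) by (meson le_trans not_le)
qed

lemma dvd_choose:
  fixes a g Z :: nat
  assumes "coprime g a" "0 < g"
  shows "a dvd ((a * Z) choose g)"
proof -
  have "g * ((a*Z) choose g) = (a*Z) * ((a*Z - 1) choose (g - 1))"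
    using times_binomial_minus1_eq[OF assms(2)] by blast
  then have "a dvd g * ((a*Z) choose g)" by simp
  then show ?thesis using assms(1)
    by (simp add: coprime_commute coprime_dvd_mult_right_iff)
qed

lemma weight_step:
  fixes a k :: nat and w :: "nat \<Rightarrow> int"
  assumes a: "0 < a" and w: "(dif ^^ k) w = (\<lambda>_. 0)"
    and pr: "\<forall>p. prime p \<and> p dvd a \<longrightarrow> k < p"
  shows "\<forall>z. Sm w (a*z + a) = int a * (Sm w (a*z + a) div int a)"
    and "(dif ^^ Suc k) (\<lambda>z. Sm w (a*z + a) div int a) = (\<lambda>_. 0)"
proof -
  define V where "V = Sm w"
  have V0: "V 0 = 0" by (simp add: V_def Sm_def)
  have Vk: "(dif ^^ Suc k) V = (\<lambda>_. 0)" by (simp add: V_def difk_Suc dif_Sm w)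
  have high: "(dif ^^ g) V = (\<lambda>_. 0)" if "k < g" for g
  proof -
    have "g = (g - Suc k) + Suc k" using that by simp
    then have "(dif ^^ g) V = (dif ^^ (g - Suc k)) ((dif ^^ Suc k) V)"
      by (metis difk_add)
    then show ?thesis by (simp add: Vk dif_zero)
  qed
  have dv: "int a dvd V (a * Z)" for Z
  proof -
    have "V (a*Z) = (\<Sum>g\<le>a*Z. (dif ^^ g) V 0 * int ((a*Z) choose g))" by (rule newton)
    also have "int a dvd \<dots>"
    proof (rule dvd_sum)
      fix g assume "g \<in> {..a*Z}"
      show "int a dvd (dif ^^ g) V 0 * int ((a*Z) choose g)"
      proof (cases "g = 0")
        case True then show ?thesis by (simp add: V0)
      next
        case False
        show ?thesis
        proof (cases "k < g")
          case True then show ?thesis by (simp add: high)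
        next
          case False2: False
          have "coprime g a" using coprime_small[OF pr] False False2 by simp
          then have "a dvd ((a*Z) choose g)" using dvd_choose False by simp
          then show ?thesis by (simp add: int_dvd_int_iff)
        qed
      qed
    qed
    finally show ?thesis .
  qed
  show 1: "\<forall>z. Sm w (a*z + a) = int a * (Sm w (a*z + a) div int a)"
  proof
    fix z
    have "int a dvd Sm w (a*z + a)" using dv[of "Suc z"] by (simp add: V_def algebra_simps)
    then show "Sm w (a*z + a) = int a * (Sm w (a*z + a) div int a)" by simp
  qed
  have "(dif ^^ Suc k) (\<lambda>n. V (n + a)) = (\<lambda>_. 0)" by (simp add: difk_shift Vk)
  then have "(dif ^^ Suc k) (\<lambda>z. V (a*z + a)) = (\<lambda>_. 0)"
    using difk_scale[of "Suc k" "\<lambda>n. V (n + a)" a] by simp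
  then have "(dif ^^ Suc k) (\<lambda>z. int a * (Sm w (a*z + a) div int a)) = (\<lambda>_. 0)"
    using 1 by (simp add: V_def)
  then have "(\<lambda>n. int a * (dif ^^ Suc k) (\<lambda>z. Sm w (a*z + a) div int a) n) = (\<lambda>_. 0)"
    by (simp add: difk_cmult)
  then show "(dif ^^ Suc k) (\<lambda>z. Sm w (a*z + a) div int a) = (\<lambda>_. 0)"
    using a by (auto simp: fun_eq_iff)
qed



definition shiftm :: "(nat \<Rightarrow> nat) \<Rightarrow> nat \<Rightarrow> nat" where
  "shiftm m i = (if i = 0 then 1 else m (Suc i))"

lemma Mprod_Suc: "m 0 = 1 \<Longrightarrow> Mprod m (Suc r) = m 1 * Mprod (shiftm m) r"
proof (induction r)
  case 0
  then show ?case by (simp add: Mprod_def shiftm_def)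
next
  case (Suc r)
  have sh: "shiftm m (Suc r) = m (Suc (Suc r))" by (simp add: shiftm_def)
  have "Mprod m (Suc (Suc r)) = Mprod m (Suc r) * m (Suc (Suc r))"
    by (simp add: Mprod_def)
  also have "\<dots> = m 1 * (Mprod (shiftm m) r * shiftm m (Suc r))"
    using Suc sh by simp
  also have "Mprod (shiftm m) r * shiftm m (Suc r) = Mprod (shiftm m) (Suc r)"
    by (simp add: Mprod_def)
  finally show ?case .
qed

lemma enat_le_minus1: "enat 1 \<le> L \<Longrightarrow> (enat r \<le> L - 1) = (enat (Suc r) \<le> L)"
  by (cases L) (auto simp: one_enat_def)

lemma Mprod_pos: "(\<forall>i. enat i \<le> L \<longrightarrow> m i > 0) \<Longrightarrow> enat r \<le> L \<Longrightarrow> Mprod m r > 0"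
  unfolding Mprod_def
proof (intro prod_pos ballI)
  fix i assume "\<forall>i. enat i \<le> L \<longrightarrow> m i > 0" "enat r \<le> L" "i \<in> {..r}"
  then show "m i > 0" by (meson atMost_iff enat_ord_simps(1) order_trans)
qed

lemma size_le_sum: "(\<forall>x\<in>#P. (x::nat) > 0) \<Longrightarrow> size P \<le> sum_mset P"
  by (induction P) auto

lemma mem_le_sum: "(x::nat) \<in># P \<Longrightarrow> x \<le> sum_mset P"
proof -
  assume "x \<in># P"
  then obtain Q where "P = add_mset x Q" by (blast dest: multi_member_split)
  then show ?thesis by simp
qed

lemma finite_mp:
  assumes "\<forall>i. enat i \<le> L \<longrightarrow> m i > 0"
  shows "finite (mary_partitions m L N)"
proof -
  have "mary_partitions m L N \<subseteq> mset ` {xs. set xs \<subseteq> {..N} \<and> length xs \<le> N}"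
  proof
    fix P assume P: "P \<in> mary_partitions m L N"
    obtain xs where xs: "mset xs = P" using ex_mset by blast
    have pos: "\<forall>x\<in>#P. x > 0" using P Mprod_pos[OF assms] by (auto simp: mary_partitions_def)
    have "set xs \<subseteq> {..N}" using P xs mem_le_sum by (auto simp: mary_partitions_def)
    moreover have "length xs \<le> N" using size_le_sum[OF pos] P xs by (auto simp: mary_partitions_def)
    ultimately show "P \<in> mset ` {xs. set xs \<subseteq> {..N} \<and> length xs \<le> N}" using xs by blast
  qed
  moreover have "finite (mset ` {xs. set xs \<subseteq> {..N} \<and> length xs \<le> N})"
    by (intro finite_imageI finite_lists_length_le) simp
  ultimately show ?thesis by (rule finite_subset)
qed


lemma sum_mset_cmult: "sum_mset (image_mset (\<lambda>x. a * x) Q) = (a::nat) * sum_mset Q"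
  by (induction Q) (auto simp: algebra_simps)

lemma filter_all: "(\<forall>x\<in>#M. P x) \<Longrightarrow> filter_mset P M = M"
  by (metis filter_mset_True filter_mset_cong)

lemma filter_rep_none: "\<not> P x \<Longrightarrow> filter_mset P (replicate_mset n x) = {#}"
  by (induction n) auto

lemma pM_rec:
  assumes m0: "m 0 = 1" and m1: "m 1 \<ge> 2" and L1: "enat 1 \<le> L"
    and pos: "\<forall>i. enat i \<le> L \<longrightarrow> m i > 0"
  shows "pM m L N = (\<Sum>j\<le>N div m 1. pM (shiftm m) (L - 1) j)"
proof -
  define a where "a = m 1"
  define m' where "m' = shiftm m"
  define L' where "L' = L - 1"
  have a2: "a \<ge> 2" using m1 a_def by simp
  have LL: "(enat r \<le> L') = (enat (Suc r) \<le> L)" for r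
    unfolding L'_def by (rule enat_le_minus1[OF L1])
  have pos': "\<forall>i. enat i \<le> L' \<longrightarrow> m' i > 0"
  proof (intro allI impI)
    fix i assume "enat i \<le> L'"
    then show "m' i > 0" using pos LL[of i] by (simp add: m'_def shiftm_def)
  qed
  have MS: "Mprod m (Suc r) = a * Mprod m' r" for r
    using Mprod_Suc[of m r, OF m0] by (simp add: a_def m'_def)
  have M0: "Mprod m 0 = 1" using m0 by (simp add: Mprod_def)
  define A where "A = Sigma {..N div a} (\<lambda>j. mary_partitions m' L' j)"
  define \<phi> where "\<phi> = (\<lambda>(j, Q). image_mset (\<lambda>x. a * x) Q + replicate_mset (N - a*j) (1::nat))"
  define \<psi> where "\<psi> = (\<lambda>P. ((N - count P 1) div a, image_mset (\<lambda>x. x div a) (filter_mset (\<lambda>x. x \<noteq> 1) P)))"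
  have F1: "\<forall>y\<in>#image_mset (\<lambda>x. a * x) Q. y \<noteq> 1 \<and> (\<exists>r. enat r \<le> L \<and> y = Mprod m r)"
    if Qm: "Q \<in> mary_partitions m' L' j" for Q j
  proof
    fix y assume "y \<in># image_mset (\<lambda>x. a * x) Q"
    then obtain x where x: "x \<in># Q" "y = a * x" by auto
    then obtain r where r: "enat r \<le> L'" "x = Mprod m' r" using Qm x(1) by (auto simp: mary_partitions_def)
    have "x > 0" using Mprod_pos[OF pos' r(1)] r(2) by simp
    then have "y \<noteq> 1" using x(2) a2 by simp
    moreover have "enat (Suc r) \<le> L \<and> y = Mprod m (Suc r)" using r LL x(2) MS by simp
    ultimately show "y \<noteq> 1 \<and> (\<exists>r. enat r \<le> L \<and> y = Mprod m r)" by blast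
  qed
  have F2: "\<exists>r. enat r \<le> L' \<and> x = a * Mprod m' r"
    if Pm: "P \<in> mary_partitions m L N" "x \<in># P" "x \<noteq> 1" for P x
  proof -
    obtain r where r: "enat r \<le> L" "x = Mprod m r" using Pm by (auto simp: mary_partitions_def)
    then have "r \<noteq> 0" using Pm(3) M0 by (metis)
    then obtain r' where "r = Suc r'" by (cases r) auto
    then show ?thesis using r LL MS by auto
  qed
  have phi_in: "\<phi> jQ \<in> mary_partitions m L N" if "jQ \<in> A" for jQ
  proof -
    obtain j Q where jQ: "jQ = (j, Q)" by (cases jQ)
    have j: "j \<le> N div a" and Q: "Q \<in> mary_partitions m' L' j" using that jQ A_def by auto
    have sQ: "sum_mset Q = j" using Q by (simp add: mary_partitions_def)
    have "a * j \<le> a * (N div a)" using j by simp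
    also have "\<dots> \<le> N" by simp
    finally have aj: "a * j \<le> N" .
    have sum: "sum_mset (image_mset (\<lambda>x. a * x) Q) = a * j"
      using sQ by (simp add: sum_mset_cmult)
    have e0: "enat 0 \<le> L" by (simp add: zero_enat_def[symmetric])
    then have ex1: "\<exists>r. enat r \<le> L \<and> 1 = Mprod m r" using M0 by metis
    show ?thesis
      unfolding jQ \<phi>_def mary_partitions_def
      using F1[OF Q] aj sum ex1 by auto
  qed
  have psi_in: "\<psi> P \<in> A" and phipsi: "\<phi> (\<psi> P) = P" if P: "P \<in> mary_partitions m L N" for P
  proof -
    define P1 where "P1 = filter_mset (\<lambda>x. x \<noteq> 1) P"
    define c where "c = count P 1"
    define Q where "Q = image_mset (\<lambda>x. x div a) P1"
    have Pdec: "P = P1 + replicate_mset c 1"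
      unfolding P1_def c_def using multiset_partition[of P "\<lambda>x. x \<noteq> 1"]
      by (simp add: filter_eq_replicate_mset)
    have P1Q: "P1 = image_mset (\<lambda>x. a * x) Q"
    proof -
      have "image_mset (\<lambda>x. a * x) Q = image_mset (\<lambda>x. a * (x div a)) P1"
        by (simp add: Q_def image_mset.compositionality comp_def)
      also have "\<dots> = image_mset (\<lambda>x. x) P1"
      proof (rule image_mset_cong)
        fix x assume "x \<in># P1"
        then have "x \<in># P" "x \<noteq> 1" by (auto simp: P1_def)
        then obtain r where "x = a * Mprod m' r" using F2[OF P] by blast
        then show "a * (x div a) = x" using a2 by simp
      qed
      finally show ?thesis by simp
    qed
    have Qin: "\<forall>y\<in>#Q. \<exists>r. enat r \<le> L' \<and> y = Mprod m' r"
    proof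
      fix y assume "y \<in># Q"
      then obtain x where x: "x \<in># P1" "y = x div a" by (auto simp: Q_def)
      then have "x \<in># P" "x \<noteq> 1" by (auto simp: P1_def)
      then obtain r where "enat r \<le> L'" "x = a * Mprod m' r" using F2[OF P] by blast
      then show "\<exists>r. enat r \<le> L' \<and> y = Mprod m' r" using x a2 by auto
    qed
    have sP: "N = a * sum_mset Q + c"
    proof -
      have "N = sum_mset P" using P by (simp add: mary_partitions_def)
      also have "\<dots> = sum_mset P1 + c" using Pdec by (metis sum_mset.union sum_mset_replicate_mset mult.right_neutral of_nat_id)
      also have "sum_mset P1 = a * sum_mset Q" using P1Q by (simp add: sum_mset_cmult)
      finally show ?thesis .
    qed
    have psiP: "\<psi> P = (sum_mset Q, Q)"
      using sP a2 by (simp add: \<psi>_def Q_def P1_def c_def)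
    have "sum_mset Q \<le> N div a"
      using sP a2 by (metis le_add1 div_le_mono nonzero_mult_div_cancel_left not_numeral_le_zero le_0_eq)
    then show "\<psi> P \<in> A" using psiP Qin by (simp add: A_def mary_partitions_def)
    show "\<phi> (\<psi> P) = P" using psiP sP Pdec P1Q by (simp add: \<phi>_def)
  qed
  have psiphi: "\<psi> (\<phi> jQ) = jQ" if "jQ \<in> A" for jQ
  proof -
    obtain j Q where jQ: "jQ = (j, Q)" by (cases jQ)
    have j: "j \<le> N div a" and Q: "Q \<in> mary_partitions m' L' j" using that jQ A_def by auto
    have "a * j \<le> a * (N div a)" using j by simp
    also have "\<dots> \<le> N" by simp
    finally have aj: "a * j \<le> N" .
    have n1: "\<forall>y\<in>#image_mset (\<lambda>x. a * x) Q. y \<noteq> 1" using F1[OF Q] by blast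
    then have c0: "count (image_mset (\<lambda>x. a * x) Q) 1 = 0" by (metis count_eq_zero_iff)
    have cnt: "count (\<phi> jQ) 1 = N - a * j" using c0 by (simp add: \<phi>_def jQ)
    have flt: "filter_mset (\<lambda>x. x \<noteq> 1) (\<phi> jQ) = image_mset (\<lambda>x. a * x) Q"
      using n1 by (simp add: \<phi>_def jQ filter_all filter_rep_none)
    have "image_mset (\<lambda>x. x div a) (image_mset (\<lambda>x. a * x) Q) = Q"
      using a2 by (simp add: image_mset.compositionality comp_def)
    then show ?thesis using cnt flt aj a2 by (simp add: \<psi>_def jQ)
  qed
  have bij: "bij_betw \<phi> A (mary_partitions m L N)"
    by (rule bij_betw_byWitness[where f'=\<psi>]) (use psiphi phipsi phi_in psi_in in auto)
  have "pM m L N = card A" unfolding pM_def using bij_betw_same_card[OF bij] by simp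
  also have "\<dots> = (\<Sum>j\<le>N div a. card (mary_partitions m' L' j))"
    unfolding A_def by (rule card_SigmaI) (use finite_mp[OF pos'] in auto)
  finally show ?thesis by (simp add: pM_def a_def m'_def L'_def)
qed


definition conv :: "(nat \<Rightarrow> int) \<Rightarrow> (nat \<Rightarrow> nat) \<Rightarrow> nat \<Rightarrow> int" where
  "conv w g K = (\<Sum>i<K. w (K - 1 - i) * int (g i))"

lemma rev_sum: "(\<Sum>k\<in>{lo..<lo+d}. h (lo + d - 1 - k)) = (\<Sum>u<d. (h::nat \<Rightarrow> int) u)"
proof (induction d arbitrary: lo)
  case 0 then show ?case by simp
next
  case (Suc d)
  have "(\<Sum>k\<in>{lo..<lo+Suc d}. h (lo + Suc d - 1 - k)) =
        h (lo + Suc d - 1 - lo) + (\<Sum>k\<in>{Suc lo..<lo+Suc d}. h (lo + Suc d - 1 - k))"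
    by (rule sum.atLeast_Suc_lessThan) simp
  also have "(\<Sum>k\<in>{Suc lo..<lo+Suc d}. h (lo + Suc d - 1 - k)) = (\<Sum>k\<in>{Suc lo..<Suc lo+d}. h (Suc lo + d - 1 - k))"
    by simp
  also have "\<dots> = (\<Sum>u<d. h u)" by (rule Suc.IH)
  finally show ?case by simp
qed

lemma transform:
  assumes a: "0 < a" and f: "\<forall>k. f k = (\<Sum>j\<le>k div a. g j)"
  shows "conv w f (a*K) = conv (\<lambda>z. Sm w (a*z + a)) g K"
proof -
  have "conv w f (a*K) = (\<Sum>k<a*K. \<Sum>j\<in>{j\<in>{..<K}. j \<le> k div a}. w (a*K-1-k) * int (g j))"
    unfolding conv_def
  proof (rule sum.cong[OF refl])
    fix k assume k: "k \<in> {..<a*K}"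
    then have "k div a < K" using a by (simp add: div_less_iff_less_mult mult.commute)
    then have eq: "{..k div a} = {j\<in>{..<K}. j \<le> k div a}" by auto
    have fk: "int (f k) = (\<Sum>j\<le>k div a. int (g j))" using f by simp
    show "w (a*K-1-k) * int (f k) = (\<Sum>j\<in>{j\<in>{..<K}. j \<le> k div a}. w (a*K-1-k) * int (g j))"
      unfolding eq[symmetric] fk by (simp only: sum_distrib_left)
  qed
  also have "\<dots> = (\<Sum>j<K. \<Sum>k | k \<in> {..<a*K} \<and> j \<le> k div a. w (a*K-1-k) * int (g j))"
    by (rule sum.swap_restrict) auto
  also have "\<dots> = (\<Sum>j<K. Sm w (a*(K-1-j) + a) * int (g j))"
  proof (rule sum.cong[OF refl])
    fix j assume j: "j \<in> {..<K}"
    define d where "d = a*(K-1-j) + a"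
    define t where "t = K - 1 - j"
    have Kj: "K = j + t + 1" using j by (simp add: t_def)
    have "a*K = a*(j + t + 1)" by (simp only: Kj[symmetric])
    also have "\<dots> = a*j + (a*t + a)" by (simp add: algebra_simps)
    finally have aK: "a*K = a*j + d" by (simp add: d_def t_def)
    have eq: "{k. k \<in> {..<a*K} \<and> j \<le> k div a} = {a*j..<a*j+d}"
    proof -
      have dv: "(j \<le> k div a) = (a*j \<le> k)" for k
        using less_eq_div_iff_mult_less_eq[OF a, of j k] by (simp add: mult.commute)
      show ?thesis using aK by (auto simp: dv)
    qed
    have "(\<Sum>k | k \<in> {..<a*K} \<and> j \<le> k div a. w (a*K-1-k) * int (g j)) =
          (\<Sum>k\<in>{a*j..<a*j+d}. w (a*j + d - 1 - k)) * int (g j)"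
      unfolding eq by (simp add: aK sum_distrib_right)
    also have "\<dots> = Sm w d * int (g j)" using rev_sum[where lo="a*j" and d=d and h=w] by (simp add: Sm_def)
    finally show "(\<Sum>k | k \<in> {..<a*K} \<and> j \<le> k div a. w (a*K-1-k) * int (g j)) =
          Sm w (a*(K-1-j) + a) * int (g j)" by (simp add: d_def)
  qed
  finally show ?thesis by (simp add: conv_def)
qed

lemma prod_shift1: "(\<Prod>j\<in>{1..Suc s}. m j) = m 1 * (\<Prod>j\<in>{1..s}. shiftm m j)"
proof -
  have "(\<Prod>j\<in>{1..Suc s}. m j) = m 1 * (\<Prod>j\<in>{Suc 1..Suc s}. m j)"
    by (rule prod.atLeast_Suc_atMost) simp
  also have "(\<Prod>j\<in>{Suc 1..Suc s}. m j) = (\<Prod>j\<in>{1..s}. m (Suc j))"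
    by (rule prod.shift_bounds_cl_Suc_ivl)
  also have "\<dots> = (\<Prod>j\<in>{1..s}. shiftm m j)"
    by (rule prod.cong) (auto simp: shiftm_def)
  finally show ?thesis .
qed

lemma conv_cmult: "conv (\<lambda>z. c * w z) g K = c * conv w g K"
  by (simp add: conv_def sum_distrib_left mult.assoc)

lemma G: "\<forall>m L w k n. m 0 = 1 \<and>
   (\<forall>j. 1 \<le> j \<and> j \<le> s \<longrightarrow> enat j \<le> L \<and> m j \<ge> 2 \<and> (\<forall>p. prime p \<and> p dvd m j \<longrightarrow> k + j - 1 < p)) \<and>
   (\<forall>i. enat i \<le> L \<longrightarrow> m i > 0) \<and> (dif ^^ k) w = (\<lambda>_. 0) \<longrightarrow>
   int (\<Prod>j\<in>{1..s}. m j) dvd conv w (pM m L) ((\<Prod>j\<in>{1..s}. m j) * n)"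
proof (induction s)
  case 0
  then show ?case by simp
next
  case (Suc s)
  show ?case
  proof (intro allI impI, elim conjE)
    fix m L w k n
    assume m0: "m 0 = (1::nat)"
      and H: "\<forall>j. 1 \<le> j \<and> j \<le> Suc s \<longrightarrow> enat j \<le> L \<and> m j \<ge> 2 \<and> (\<forall>p. prime p \<and> p dvd m j \<longrightarrow> k + j - 1 < p)"
      and pos: "\<forall>i. enat i \<le> L \<longrightarrow> m i > 0" and w: "(dif ^^ k) w = (\<lambda>_. 0)"
    define a where "a = m 1"
    define m' where "m' = shiftm m"
    define L' where "L' = L - 1"
    have H1: "enat 1 \<le> L \<and> a \<ge> 2 \<and> (\<forall>p. prime p \<and> p dvd a \<longrightarrow> k < p)"
      using H[rule_format, of 1] by (simp add: a_def)
    then have L1: "enat 1 \<le> L" and a2: "a \<ge> 2" and pa: "\<forall>p. prime p \<and> p dvd a \<longrightarrow> k < p" by auto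
    have LL: "(enat r \<le> L') = (enat (Suc r) \<le> L)" for r
      unfolding L'_def by (rule enat_le_minus1[OF L1])
    have pos': "\<forall>i. enat i \<le> L' \<longrightarrow> m' i > 0"
    proof (intro allI impI)
      fix i assume "enat i \<le> L'"
      then show "m' i > 0" using pos LL[of i] by (simp add: m'_def shiftm_def)
    qed
    define P' where "P' = (\<Prod>j\<in>{1..s}. m' j)"
    define K where "K = P' * n"
    have prodeq: "(\<Prod>j\<in>{1..Suc s}. m j) = a * P'"
      by (simp only: prod_shift1 a_def P'_def m'_def)
    have rec: "\<forall>N. pM m L N = (\<Sum>j\<le>N div a. pM m' L' j)"
      using pM_rec[OF m0 _ L1 pos] a2 by (simp add: a_def m'_def L'_def)
    define w'' where "w'' = (\<lambda>z. Sm w (a*z + a) div int a)"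
    have ws1: "\<forall>z. Sm w (a*z + a) = int a * w'' z"
      using weight_step(1)[OF _ w pa] a2 by (simp add: w''_def)
    have ws2: "(dif ^^ Suc k) w'' = (\<lambda>_. 0)"
      using weight_step(2)[OF _ w pa] a2 by (simp add: w''_def)
    have "conv w (pM m L) (a * K) = conv (\<lambda>z. Sm w (a*z + a)) (pM m' L') K"
      by (rule transform) (use a2 rec in auto)
    also have "\<dots> = int a * conv w'' (pM m' L') K"
      using ws1 by (simp add: conv_cmult)
    finally have ceq: "conv w (pM m L) (a * K) = int a * conv w'' (pM m' L') K" .
    have m'0: "m' 0 = 1" by (simp add: m'_def shiftm_def)
    have H': "\<forall>j. 1 \<le> j \<and> j \<le> s \<longrightarrow> enat j \<le> L' \<and> m' j \<ge> 2 \<and> (\<forall>p. prime p \<and> p dvd m' j \<longrightarrow> Suc k + j - 1 < p)"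
    proof (intro allI impI)
      fix j assume j: "1 \<le> j \<and> j \<le> s"
      then have "enat (Suc j) \<le> L \<and> m (Suc j) \<ge> 2 \<and> (\<forall>p. prime p \<and> p dvd m (Suc j) \<longrightarrow> k + Suc j - 1 < p)"
        using H[rule_format, of "Suc j"] by simp
      then show "enat j \<le> L' \<and> m' j \<ge> 2 \<and> (\<forall>p. prime p \<and> p dvd m' j \<longrightarrow> Suc k + j - 1 < p)"
        using LL[of j] j by (simp add: m'_def shiftm_def)
    qed
    have "int P' dvd conv w'' (pM m' L') K"
      using Suc.IH[rule_format, of m' L' "Suc k" w'' n] m'0 H' pos' ws2 by (simp add: P'_def K_def)
    then have "int a * int P' dvd int a * conv w'' (pM m' L') K" by (rule mult_dvd_mono[OF dvd_refl])
    then have "int (a * P') dvd conv w (pM m L) (a * K)" using ceq by (simp only: of_nat_mult)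
    then show "int (\<Prod>j\<in>{1..Suc s}. m j) dvd conv w (pM m L) ((\<Prod>j\<in>{1..Suc s}. m j) * n)"
      unfolding prodeq K_def mult.assoc .
  qed
qed

theorem corollary1p4:
  fixes m :: "nat \<Rightarrow> nat" and L :: enat and n r :: nat
  assumes m0: "m 0 = 1"
    and m_ge2: "\<forall>j. 1 \<le> j \<and> enat j \<le> L \<longrightarrow> m j \<ge> 2"
    and prime_cond: "\<forall>t p. 1 \<le> t \<and> enat t \<le> L \<and> prime p \<and> p dvd m t \<longrightarrow> p \<ge> t"
    and n_pos: "n > 0" and r_pos: "r > 0" and r_le: "enat r \<le> L"
  shows "(\<Prod>t\<in>{2..r}. m t) dvd pM m L ((\<Prod>i\<in>{1..r}. m i) * n - 1)"
proof -
  obtain r' where r: "r = Suc r'" using r_pos by (cases r) auto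
  define a where "a = m 1"
  define m' where "m' = shiftm m"
  define L' where "L' = L - 1"
  have "enat 1 \<le> enat r" using r_pos by simp
  then have L1: "enat 1 \<le> L" using r_le by (rule order_trans)
  have a2: "a \<ge> 2" using m_ge2 L1 by (simp add: a_def)
  have pos: "\<forall>i. enat i \<le> L \<longrightarrow> m i > 0"
  proof (intro allI impI)
    fix i assume "enat i \<le> L"
    then show "m i > 0" using m0 m_ge2[rule_format, of i] by (cases "i = 0") auto
  qed
  have LL: "(enat q \<le> L') = (enat (Suc q) \<le> L)" for q
    unfolding L'_def by (rule enat_le_minus1[OF L1])
  have pos': "\<forall>i. enat i \<le> L' \<longrightarrow> m' i > 0"
  proof (intro allI impI)
    fix i assume "enat i \<le> L'"
    then show "m' i > 0" using pos LL[of i] by (simp add: m'_def shiftm_def)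
  qed
  define P' where "P' = (\<Prod>j\<in>{1..r'}. m' j)"
  define K where "K = P' * n"
  have P'pos: "P' > 0"
    unfolding P'_def
  proof (intro prod_pos ballI)
    fix j assume "j \<in> {1..r'}"
    then have "enat (Suc j) \<le> enat r" using r by simp
    then have "enat (Suc j) \<le> L" using r_le by (rule order_trans)
    then have "enat j \<le> L'" using LL by simp
    then show "m' j > 0" using pos' by blast
  qed
  have Kpos: "K > 0" using P'pos n_pos by (simp add: K_def)
  have prodeq: "(\<Prod>i\<in>{1..r}. m i) = a * P'"
    unfolding r by (simp only: prod_shift1 a_def P'_def m'_def)
  have prod2: "(\<Prod>t\<in>{2..r}. m t) = P'"
  proof -
    have "(\<Prod>t\<in>{2..r}. m t) = (\<Prod>t\<in>{Suc 1..Suc r'}. m t)" by (simp only: r numeral_2_eq_2 One_nat_def)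
    also have "\<dots> = (\<Prod>j\<in>{1..r'}. m (Suc j))" by (rule prod.shift_bounds_cl_Suc_ivl)
    also have "\<dots> = P'" unfolding P'_def by (rule prod.cong) (auto simp: m'_def shiftm_def)
    finally show ?thesis .
  qed
  have Ndiv: "(a * K - 1) div a = K - 1"
  proof (rule div_nat_eqI)
    have "a * (K - 1) = a * K - a" by (simp add: diff_mult_distrib2)
    then show "a * (K - 1) \<le> a * K - 1" using a2 by simp
    show "a * K - 1 < a * Suc (K - 1)" using Kpos a2 by simp
  qed
  have "pM m L (a * K - 1) = (\<Sum>j\<le>K - 1. pM m' L' j)"
    using pM_rec[OF m0 _ L1 pos, of "a*K - 1"] a2 Ndiv by (simp add: a_def m'_def L'_def)
  also have "\<dots> = (\<Sum>j<K. pM m' L' j)"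
  proof -
    have "{..K - 1} = {..<K}" using Kpos by auto
    then show ?thesis by simp
  qed
  finally have pMeq: "int (pM m L (a * K - 1)) = conv (\<lambda>_. 1) (pM m' L') K"
    by (simp add: conv_def)
  have d1: "(dif ^^ 1) (\<lambda>_. 1) = (\<lambda>_. 0)"
    by (simp add: funpow_Suc_dif fun_eq_iff dif_apply)
  have m'0: "m' 0 = 1" by (simp add: m'_def shiftm_def)
  have H': "\<forall>j. 1 \<le> j \<and> j \<le> r' \<longrightarrow> enat j \<le> L' \<and> m' j \<ge> 2 \<and> (\<forall>p. prime p \<and> p dvd m' j \<longrightarrow> 1 + j - 1 < p)"
  proof (intro allI impI)
    fix j assume j: "1 \<le> j \<and> j \<le> r'"
    then have "enat (Suc j) \<le> enat r" using r by simp
    then have e: "enat (Suc j) \<le> L" using r_le by (rule order_trans)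
    then have "m (Suc j) \<ge> 2" using m_ge2 by simp
    moreover have "\<forall>p. prime p \<and> p dvd m (Suc j) \<longrightarrow> j < p"
    proof (intro allI impI)
      fix p assume "prime p \<and> p dvd m (Suc j)"
      then have "Suc j \<le> p" using prime_cond[rule_format, of "Suc j" p] e by simp
      then show "j < p" by simp
    qed
    ultimately show "enat j \<le> L' \<and> m' j \<ge> 2 \<and> (\<forall>p. prime p \<and> p dvd m' j \<longrightarrow> 1 + j - 1 < p)"
      using LL[of j] e j by (simp add: m'_def shiftm_def)
  qed
  have "int P' dvd conv (\<lambda>_. 1) (pM m' L') K"
    using G[where s=r', rule_format, where m=m' and L=L' and w="\<lambda>_. 1" and k=1 and n=n] m'0 H' pos' d1 by (simp add: P'_def K_def)
  then have "int P' dvd int (pM m L (a * K - 1))" using pMeq by simp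
  then have "P' dvd pM m L (a * K - 1)" by (simp add: int_dvd_int_iff)
  then show ?thesis using prodeq prod2 by (simp add: K_def mult.assoc)
qed

end
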